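(* Let $\tau_1,\tau_2\in S_n$ both avoid the patterns $132$ and $123$. Then $\tau_1\circ\tau_2$ is $1$-almost-increasing.
   Context: Permutations $\pi\in S_n$ are viewed as bijections of $\{1,\dots,n\}$ and written in one-line form $[\pi(1)\cdots\pi(n)]$; $(\tau_1\circ\tau_2)(i)=\tau_1(\tau_2(i))$. A permutation $\pi\in S_n$ is $1$-almost-increasing if for every $i\in\{1,\dots,n\}$ there is at most one $j\le i$ with $\pi_j>i$; equivalently, $\pi$ avoids the patterns $4321$, $4312$, $3421$ and $3412$. *)

theory Defs
  imports "HOL-Combinatorics.Permutations"
begin

text \<open>A permutation of [n] is a function nat => nat with p permutes {1..n}.
  A pattern is given in one-line notation as a list of distinct values 1..k.
  p (on [n]) contains the pattern sigma if there are positions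
  i_1 < ... < i_k in {1..n} whose values are order-isomorphic to sigma.\<close>

definition contains_pattern :: "nat \<Rightarrow> (nat \<Rightarrow> nat) \<Rightarrow> nat list \<Rightarrow> bool" where
  "contains_pattern n p \<sigma> \<longleftrightarrow>
     (\<exists>idx :: nat \<Rightarrow> nat.
        (\<forall>a b. a < b \<and> b < length \<sigma> \<longrightarrow> idx a < idx b) \<and>
        (\<forall>a < length \<sigma>. idx a \<in> {1..n}) \<and>
        (\<forall>a < length \<sigma>. \<forall>b < length \<sigma>. p (idx a) < p (idx b) \<longleftrightarrow> \<sigma> ! a < \<sigma> ! b))"

definition avoids_pattern :: "nat \<Rightarrow> (nat \<Rightarrow> nat) \<Rightarrow> nat list \<Rightarrow> bool" where
  "avoids_pattern n p \<sigma> \<longleftrightarrow> \<not> contains_pattern n p \<sigma>"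

definition almost_increasing_1 :: "nat \<Rightarrow> (nat \<Rightarrow> nat) \<Rightarrow> bool" where
  "almost_increasing_1 n p \<longleftrightarrow> (\<forall>i \<in> {1..n}. card {j \<in> {1..i}. p j > i} \<le> 1)"

end

theory Submission
  imports Defs
begin

lemma all3: "(\<forall>a<(3::nat). P a) = (P 0 \<and> P 1 \<and> P 2)"
  unfolding numeral_3_eq_3 by (auto simp: less_Suc_eq numeral_2_eq_2)

lemma lowbound:
  fixes \<sigma> :: "nat \<Rightarrow> nat"
  assumes perm: "\<sigma> permutes {1..n}"
    and a1: "avoids_pattern n \<sigma> [1,3,2]" and a2: "avoids_pattern n \<sigma> [1,2,3]"
    and p: "p \<in> {1..n}"
  shows "n \<le> \<sigma> p + p"
proof (rule ccontr)
  assume H: "\<not> n \<le> \<sigma> p + p"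
  have bij: "bij_betw \<sigma> {1..n} {1..n}" using perm by (rule permutes_imp_bij)
  have sp: "\<sigma> p \<in> {1..n}" using bij p by (auto simp: bij_betw_def)
  define Q where "Q = {q \<in> {1..n}. \<sigma> q > \<sigma> p}"
  have "\<sigma> ` Q = {\<sigma> p<..n}"
  proof
    show "\<sigma> ` Q \<subseteq> {\<sigma> p<..n}" using bij unfolding Q_def bij_betw_def by auto
    show "{\<sigma> p<..n} \<subseteq> \<sigma> ` Q"
    proof
      fix v assume v: "v \<in> {\<sigma> p<..n}"
      then have "v \<in> {1..n}" using sp by auto
      then have "v \<in> \<sigma> ` {1..n}" using bij by (simp add: bij_betw_def)
      then obtain q where "q \<in> {1..n}" "\<sigma> q = v" by blast
      then show "v \<in> \<sigma> ` Q" using v unfolding Q_def by auto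
    qed
  qed
  moreover have "inj_on \<sigma> Q" using bij_betw_imp_inj_on[OF bij] by (rule inj_on_subset) (auto simp: Q_def)
  ultimately have cQ: "card Q = n - \<sigma> p" using card_image by fastforce
  have "\<exists>q1 q2. p < q1 \<and> q1 < q2 \<and> q2 \<in> Q \<and> q1 \<in> Q"
  proof (rule ccontr)
    assume N: "\<not> ?thesis"
    have c1: "card (Q \<inter> {p<..}) \<le> 1"
    proof (cases "Q \<inter> {p<..} = {}")
      case False
      then obtain q0 where q0: "q0 \<in> Q \<inter> {p<..}" by blast
      have "Q \<inter> {p<..} \<subseteq> {q0}"
      proof
        fix q assume q: "q \<in> Q \<inter> {p<..}"
        show "q \<in> {q0}"
        proof (rule ccontr)
          assume "q \<notin> {q0}"
          then have "q < q0 \<or> q0 < q" by auto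
          then show False using N q q0 by auto
        qed
      qed
      then show ?thesis using card_mono[of "{q0}"] by simp
    qed simp
    have "Q \<subseteq> {1..<p} \<union> (Q \<inter> {p<..})" unfolding Q_def using linorder_neq_iff by fastforce
    moreover have "finite ({1..<p} \<union> (Q \<inter> {p<..}))" unfolding Q_def by auto
    ultimately have "card Q \<le> card ({1..<p} \<union> (Q \<inter> {p<..}))" by (meson card_mono)
    also have "\<dots> \<le> card {1..<p} + card (Q \<inter> {p<..})" by (rule card_Un_le)
    finally have "card Q \<le> card {1..<p} + card (Q \<inter> {p<..})" .
    hence "card Q \<le> p" using p c1 by simp
    then show False using cQ H by linarith
  qed
  then obtain q1 q2 where q: "p < q1" "q1 < q2" "q1 \<in> Q" "q2 \<in> Q" by blast
  have qn: "q1 \<in> {1..n}" "q2 \<in> {1..n}" "\<sigma> q1 > \<sigma> p" "\<sigma> q2 > \<sigma> p" using q unfolding Q_def by auto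
  have ne: "\<sigma> q1 \<noteq> \<sigma> q2" using inj_onD[OF bij_betw_imp_inj_on[OF bij]] qn q(2) by fastforce
  define idx where "idx = (\<lambda>a::nat. if a = 0 then p else if a = 1 then q1 else q2)"
  show False
  proof (cases "\<sigma> q1 < \<sigma> q2")
    case True
    have "contains_pattern n \<sigma> [1,2,3]" unfolding contains_pattern_def
    proof (rule exI[of _ idx], intro conjI)
      show "\<forall>a b. a < b \<and> b < length [1,2,3::nat] \<longrightarrow> idx a < idx b"
      proof (intro allI impI)
        fix a b :: nat assume "a < b \<and> b < length [1,2,3::nat]"
        then have "(a=0\<and>b=1) \<or> (a=0\<and>b=2) \<or> (a=1\<and>b=2)" by auto
        then show "idx a < idx b" using q by (auto simp: idx_def)
      qed
      show "\<forall>a<length [1,2,3::nat]. idx a \<in> {1..n}" using p qn by (simp add: all3 idx_def)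
      show "\<forall>a<length [1,2,3::nat]. \<forall>b<length [1,2,3::nat]. \<sigma> (idx a) < \<sigma> (idx b) \<longleftrightarrow> [1,2,3::nat] ! a < [1,2,3] ! b"
        using qn True by (simp add: all3 idx_def)
    qed
    then show False using a2 unfolding avoids_pattern_def by simp
  next
    case False
    hence F: "\<sigma> q2 < \<sigma> q1" using ne by simp
    have "contains_pattern n \<sigma> [1,3,2]" unfolding contains_pattern_def
    proof (rule exI[of _ idx], intro conjI)
      show "\<forall>a b. a < b \<and> b < length [1,3,2::nat] \<longrightarrow> idx a < idx b"
      proof (intro allI impI)
        fix a b :: nat assume "a < b \<and> b < length [1,3,2::nat]"
        then have "(a=0\<and>b=1) \<or> (a=0\<and>b=2) \<or> (a=1\<and>b=2)" by auto
        then show "idx a < idx b" using q by (auto simp: idx_def)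
      qed
      show "\<forall>a<length [1,3,2::nat]. idx a \<in> {1..n}" using p qn by (simp add: all3 idx_def)
      show "\<forall>a<length [1,3,2::nat]. \<forall>b<length [1,3,2::nat]. \<sigma> (idx a) < \<sigma> (idx b) \<longleftrightarrow> [1,3,2::nat] ! a < [1,3,2] ! b"
        using qn F by (simp add: all3 idx_def)
    qed
    then show False using a1 unfolding avoids_pattern_def by simp
  qed
qed

theorem proposition7p2:
  fixes n :: nat and \<tau>1 \<tau>2 :: "nat \<Rightarrow> nat"
  assumes "\<tau>1 permutes {1..n}" and "\<tau>2 permutes {1..n}"
    and "avoids_pattern n \<tau>1 [1,3,2]" and "avoids_pattern n \<tau>1 [1,2,3]"
    and "avoids_pattern n \<tau>2 [1,3,2]" and "avoids_pattern n \<tau>2 [1,2,3]"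
  shows "almost_increasing_1 n (\<tau>1 \<circ> \<tau>2)"
  unfolding almost_increasing_1_def
proof
  fix i assume i: "i \<in> {1..n}"
  have b1: "bij_betw \<tau>1 {1..n} {1..n}" using assms(1) by (rule permutes_imp_bij)
  have b2: "bij_betw \<tau>2 {1..n} {1..n}" using assms(2) by (rule permutes_imp_bij)
  define S where "S = {j \<in> {1..i}. (\<tau>1 \<circ> \<tau>2) j > i}"
  show "card S \<le> 1"
  proof (rule ccontr)
    assume C: "\<not> card S \<le> 1"
    have fS: "finite S" unfolding S_def by simp
    obtain j1 j2 where j: "j1 \<in> S" "j2 \<in> S" "j1 \<noteq> j2"
      using C card_le_Suc0_iff_eq[OF fS] by auto
    define k1 where "k1 = \<tau>2 j1"
    define k2 where "k2 = \<tau>2 j2"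
    have jn: "j1 \<in> {1..n}" "j2 \<in> {1..n}" "j1 \<le> i" "j2 \<le> i" using j i unfolding S_def by auto
    have kn: "k1 \<in> {1..n}" "k2 \<in> {1..n}" using b2 jn unfolding k1_def k2_def bij_betw_def by auto
    have kne: "k1 \<noteq> k2" using inj_onD[OF bij_betw_imp_inj_on[OF b2]] jn j(3) unfolding k1_def k2_def by blast
    have "n \<le> k1 + j1" using lowbound[OF assms(2) assms(5) assms(6) jn(1)] k1_def by simp
    hence k1i: "n \<le> k1 + i" using jn by simp
    have "n \<le> k2 + j2" using lowbound[OF assms(2) assms(5) assms(6) jn(2)] k2_def by simp
    hence k2i: "n \<le> k2 + i" using jn by simp
    have t1: "\<tau>1 k1 > i" "\<tau>1 k2 > i" using j unfolding S_def k1_def k2_def by auto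
    have "\<tau>1 k1 \<in> {1..n}" using b1 kn unfolding bij_betw_def by auto
    hence iln: "i < n" using t1 by auto
    define A where "A = insert k1 (insert k2 {1..<n-i})"
    have cA: "card A = n - i + 1"
    proof -
      have "k1 \<notin> insert k2 {1..<n-i}" "k2 \<notin> {1..<n-i}" using kne k1i k2i by auto
      then show ?thesis unfolding A_def using kn i iln by auto
    qed
    have "\<tau>1 ` A \<subseteq> {i<..n}"
    proof
      fix v assume "v \<in> \<tau>1 ` A"
      then obtain a where a: "a \<in> A" "v = \<tau>1 a" by blast
      have an: "a \<in> {1..n}" using a kn unfolding A_def by auto
      have "\<tau>1 a \<in> {1..n}" using an b1 unfolding bij_betw_def by auto
      moreover have "\<tau>1 a > i"
      proof (cases "a = k1 \<or> a = k2")
        case True then show ?thesis using t1 by auto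
      next
        case False
        hence "a < n - i" using a unfolding A_def by auto
        moreover have "n \<le> \<tau>1 a + a" using lowbound[OF assms(1) assms(3) assms(4) an] .
        ultimately show ?thesis by linarith
      qed
      ultimately show "v \<in> {i<..n}" using a by auto
    qed
    moreover have "A \<subseteq> {1..n}" using kn unfolding A_def by auto
    hence "inj_on \<tau>1 A"
      using b1 unfolding bij_betw_def by (meson inj_on_subset)
    ultimately have "card A \<le> card {i<..n}" by (metis card_inj_on_le finite_greaterThanAtMost)
    then show False using cA by simp
  qed
qed

end
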